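(* Let $S$ be a set and let $P$ be a set of $S$-probabilities such that $0,1\in P$ and $1-p\in P$ for every $p\in P$. Then all elements of $P$ are varying if and only if $P$ is complemented, i.e. $p\wedge p'=0$ for all $p\in P$.
   Context: An $S$-probability is a function $p\colon S\to[0,1]$; sets of $S$-probabilities are ordered pointwise, $0,1$ are the constant functions and $p':=1-p$. For $p,q\in P$, $p\wedge q=0$ means that the only $x\in P$ with $x\le p$ and $x\le q$ is $x=0$. An $S$-probability $p$ is varying if whenever $p\le 1/2$ pointwise or $p\ge 1/2$ pointwise, then $p=0$ or $p=1$. *)

theory Defs
  imports Complex_Main
begin

text \<open>We represent it as a real-valued
  function on the ambient type that is 0 outside S (so functions are determined by
  their values on S, and the pointwise order of functions is the order on S).\<close>

definition sprob :: "'a set \<Rightarrow> ('a \<Rightarrow> real) \<Rightarrow> bool" where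
  "sprob S p \<longleftrightarrow> (\<forall>x\<in>S. 0 \<le> p x \<and> p x \<le> 1) \<and> (\<forall>x. x \<notin> S \<longrightarrow> p x = 0)"

definition pzero :: "'a set \<Rightarrow> 'a \<Rightarrow> real" where
  "pzero S = (\<lambda>x. 0)"

definition pone :: "'a set \<Rightarrow> 'a \<Rightarrow> real" where
  "pone S = (\<lambda>x. if x \<in> S then 1 else 0)"

definition pcompl :: "'a set \<Rightarrow> ('a \<Rightarrow> real) \<Rightarrow> 'a \<Rightarrow> real" where
  "pcompl S p = (\<lambda>x. if x \<in> S then 1 - p x else 0)"

definition pleq :: "'a set \<Rightarrow> ('a \<Rightarrow> real) \<Rightarrow> ('a \<Rightarrow> real) \<Rightarrow> bool" where
  "pleq S p q \<longleftrightarrow> (\<forall>x\<in>S. p x \<le> q x)"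

definition meet_zero :: "'a set \<Rightarrow> ('a \<Rightarrow> real) set \<Rightarrow> ('a \<Rightarrow> real) \<Rightarrow> ('a \<Rightarrow> real) \<Rightarrow> bool" where
  "meet_zero S P p q \<longleftrightarrow> (\<forall>x\<in>P. pleq S x p \<and> pleq S x q \<longrightarrow> x = pzero S)"

definition varying :: "'a set \<Rightarrow> ('a \<Rightarrow> real) \<Rightarrow> bool" where
  "varying S p \<longleftrightarrow>
     (((\<forall>x\<in>S. p x \<le> 1/2) \<or> (\<forall>x\<in>S. p x \<ge> 1/2)) \<longrightarrow> p = pzero S \<or> p = pone S)"

definition complemented :: "'a set \<Rightarrow> ('a \<Rightarrow> real) set \<Rightarrow> bool" where
  "complemented S P \<longleftrightarrow> (\<forall>p\<in>P. meet_zero S P p (pcompl S p))"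

end

theory Submission
  imports Defs
begin

theorem mainTheorem2:
  fixes S :: "'a set" and P :: "('a \<Rightarrow> real) set"
  assumes "\<forall>p\<in>P. sprob S p"
    and "pzero S \<in> P" and "pone S \<in> P"
    and "\<forall>p\<in>P. pcompl S p \<in> P"
  shows "(\<forall>p\<in>P. varying S p) \<longleftrightarrow> complemented S P"
proof
  assume V: "\<forall>p\<in>P. varying S p"
  show "complemented S P"
    unfolding complemented_def meet_zero_def
  proof (intro ballI impI)
    fix p x assume p: "p \<in> P" and x: "x \<in> P" and le: "pleq S x p \<and> pleq S x (pcompl S p)"
    have h: "\<forall>s\<in>S. x s \<le> 1/2"
      using le by (auto simp: pleq_def pcompl_def) (smt (verit))
    then have "x = pzero S \<or> x = pone S" using V x unfolding varying_def by blast
    moreover have "x \<noteq> pone S \<or> x = pzero S"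
    proof (cases "S = {}")
      case True thus ?thesis by (auto simp: pone_def pzero_def)
    next
      case False then obtain s where "s \<in> S" by blast
      thus ?thesis using h by (auto simp: pone_def)
    qed
    ultimately show "x = pzero S" by blast
  qed
next
  assume C: "complemented S P"
  show "\<forall>p\<in>P. varying S p"
    unfolding varying_def
  proof (intro ballI impI)
    fix p assume p: "p \<in> P" and h: "(\<forall>x\<in>S. p x \<le> 1/2) \<or> (\<forall>x\<in>S. p x \<ge> 1/2)"
    have mz: "meet_zero S P p (pcompl S p)" using C p unfolding complemented_def by blast
    show "p = pzero S \<or> p = pone S"
      using h
    proof
      assume a: "\<forall>x\<in>S. p x \<le> 1/2"
      have "pleq S p p \<and> pleq S p (pcompl S p)"
        using a by (auto simp: pleq_def pcompl_def)
      then show ?thesis using mz p unfolding meet_zero_def by blast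
    next
      assume a: "\<forall>x\<in>S. p x \<ge> 1/2"
      have cp: "pcompl S p \<in> P" using assms(4) p by blast
      have "pleq S (pcompl S p) p \<and> pleq S (pcompl S p) (pcompl S p)"
        using a by (auto simp: pleq_def pcompl_def)
      then have z: "pcompl S p = pzero S" using mz cp unfolding meet_zero_def by blast
      have sp: "sprob S p" using assms(1) p by blast
      have "p = pone S"
      proof
        fix s show "p s = pone S s"
        proof (cases "s \<in> S")
          case True
          then have "1 - p s = 0" using fun_cong[OF z, of s] by (simp add: pcompl_def pzero_def)
          thus ?thesis using True by (simp add: pone_def)
        next
          case False thus ?thesis using sp by (simp add: pone_def sprob_def)
        qed
      qed
      thus ?thesis by blast
    qed
  qed
qed

end
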